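(* Consider the linear content-access game described in the context, with $\tau>0$, $\pi_G\in[0,1]$, $\pi_B=1-\pi_G$, $\lambda_{ps}(G)\ge\lambda_{ps}(B)>0$ and $\lambda_{pu}>0$. Then: (i) if $\frac{\pi_G}{\lambda_{ps}(G)} \geq \frac{\pi_B}{\lambda_{ps}(B)}$, then $\alpha=0$ is a symmetric Wardrop equilibrium; (ii) if $\frac{\pi_G}{\lambda_{ps}(G)} \leq \frac{\pi_B}{\lambda_{ps}(B)}$ and $\frac{\pi_G}{\lambda_{ps}(G)+\lambda_{pu}} \geq \frac{\pi_B}{\lambda_{ps}(B)+\lambda_{pu}}$, then every threshold $\alpha$ with $0\le\alpha\le\beta_{\tau,B}$ is a symmetric Wardrop equilibrium; (iii) if $\frac{\pi_G}{\lambda_{ps}(G)} \leq \frac{\pi_B}{\lambda_{ps}(B)}$ and $\frac{\pi_G}{\lambda_{ps}(G)+\lambda_{pu}} < \frac{\pi_B}{\lambda_{ps}(B)+\lambda_{pu}}$, then the threshold $\alpha=\beta_{\tau,B}$ (i.e. $\alpha$ with $\alpha=\beta_{\tau,B}$ when all others play $\alpha$) is a symmetric Wardrop equilibrium.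
   Context: A content has a type $\theta\in\{G,B\}$ (good/bad) and lifetime $\tau>0$. Users hold beliefs $\pi_G$ that the content is good and $\pi_B=1-\pi_G$ that it is bad. Each (pull) user uses a threshold strategy: access the content once its viewcount reaches a threshold. All users other than a tagged user use a common threshold $\alpha\ge 0$; the tagged user uses $\beta\ge0$ (a single user's deviation does not affect the viewcount). Linear dynamics: for type $\theta$, with push rate $\lambda_{ps}(\theta)>0$ and type-independent pull rate $\lambda_{pu}>0$, let $t_\alpha(\theta)=\alpha/\lambda_{ps}(\theta)$ and $X(t,\theta)=\lambda_{ps}(\theta)\,t+\lambda_{pu}\,(t-t_\alpha(\theta))^+$ for $t\ge0$. For $\beta\ge0$, $t_\beta(\theta)=\min\{t\ge 0: X(t,\theta)=\beta\}$. Let $\beta_{\tau,B}=X(\tau,B)$ (the value with $t_{\beta_{\tau,B}}(B)=\tau$; it depends on $\alpha$). The tagged user's utility is $U(\alpha,\beta)=\pi_G(\tau-t_\beta(G))-\pi_B(\tau-t_\beta(B))$ for $0\le\beta\le\beta_{\tau,B}$; a best response to $\alpha$ is a maximizer of $U(\alpha,\cdot)$ over $[0,\beta_{\tau,B}]$. A threshold $\alpha$ with $0\le\alpha\le\beta_{\tau,B}$ is a symmetric Wardrop equilibrium if $\beta=\alpha$ is a best response to $\alpha$. *)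

theory Defs
  imports Complex_Main
begin

datatype ctype = G | B

text \<open>Viewcount of content of type th at time t when other users use threshold alpha;
  lps = push rate (type dependent), lpu = pull rate.\<close>
definition viewcount :: "(ctype \<Rightarrow> real) \<Rightarrow> real \<Rightarrow> real \<Rightarrow> ctype \<Rightarrow> real \<Rightarrow> real" where
  "viewcount lps lpu alpha th t = lps th * t + lpu * max 0 (t - alpha / lps th)"

definition t_beta :: "(ctype \<Rightarrow> real) \<Rightarrow> real \<Rightarrow> real \<Rightarrow> real \<Rightarrow> ctype \<Rightarrow> real" where
  "t_beta lps lpu alpha beta th = (LEAST t. t \<ge> 0 \<and> viewcount lps lpu alpha th t = beta)"

definition beta_tau_B :: "(ctype \<Rightarrow> real) \<Rightarrow> real \<Rightarrow> real \<Rightarrow> real \<Rightarrow> real" where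
  "beta_tau_B lps lpu tau alpha = viewcount lps lpu alpha B tau"

definition utility :: "(ctype \<Rightarrow> real) \<Rightarrow> real \<Rightarrow> real \<Rightarrow> real \<Rightarrow> real \<Rightarrow> real \<Rightarrow> real" where
  "utility lps lpu tau piG alpha beta =
     piG * (tau - t_beta lps lpu alpha beta G) - (1 - piG) * (tau - t_beta lps lpu alpha beta B)"

definition best_response :: "(ctype \<Rightarrow> real) \<Rightarrow> real \<Rightarrow> real \<Rightarrow> real \<Rightarrow> real \<Rightarrow> real \<Rightarrow> bool" where
  "best_response lps lpu tau piG alpha beta \<longleftrightarrow>
     0 \<le> beta \<and> beta \<le> beta_tau_B lps lpu tau alpha \<and>
     (\<forall>b. 0 \<le> b \<and> b \<le> beta_tau_B lps lpu tau alpha \<longrightarrow>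
          utility lps lpu tau piG alpha b \<le> utility lps lpu tau piG alpha beta)"

definition symmetric_wardrop :: "(ctype \<Rightarrow> real) \<Rightarrow> real \<Rightarrow> real \<Rightarrow> real \<Rightarrow> real \<Rightarrow> bool" where
  "symmetric_wardrop lps lpu tau piG alpha \<longleftrightarrow>
     0 \<le> alpha \<and> alpha \<le> beta_tau_B lps lpu tau alpha \<and>
     best_response lps lpu tau piG alpha alpha"

end

theory Submission
  imports Defs
begin

lemma tb_formula:
  assumes a: "lps th > 0" and c: "lpu > 0" and al: "alpha \<ge> 0" and b: "beta \<ge> 0"
  shows "t_beta lps lpu alpha beta th =
    (if beta \<le> alpha then beta / lps th else (beta + lpu * alpha / lps th) / (lps th + lpu))"
    (is "_ = ?T")
proof -
  let ?a = "lps th"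
  have ac: "?a + lpu \<noteq> 0" "?a \<noteq> 0" using a c by auto
  have vT: "?T \<ge> 0 \<and> viewcount lps lpu alpha th ?T = beta"
  proof (cases "beta \<le> alpha")
    case True
    have "beta / ?a - alpha / ?a \<le> 0" using True a by (simp add: divide_nonpos_pos diff_divide_distrib[symmetric])
    then show ?thesis using True a b by (simp add: viewcount_def)
  next
    case False
    have T: "?T = (beta + lpu * alpha / ?a) / (?a + lpu)" using False by simp
    have eq: "(beta + lpu * alpha / ?a) / (?a + lpu) - alpha / ?a = (beta - alpha) / (?a + lpu)"
      using ac by (simp add: divide_simps) (simp add: algebra_simps)
    have ge: "(beta + lpu * alpha / ?a) / (?a + lpu) - alpha / ?a \<ge> 0"
      unfolding eq using False a c by simp
    have "?a * ((beta + lpu * alpha / ?a) / (?a + lpu)) + lpu * ((beta + lpu * alpha / ?a) / (?a + lpu) - alpha / ?a) = beta"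
      using ac by (simp add: divide_simps) (simp add: algebra_simps)
    moreover have "(beta + lpu * alpha / ?a) / (?a + lpu) \<ge> 0" using a c al b by simp
    ultimately show ?thesis using T ge by (simp add: viewcount_def max_def)
  qed
  have uniq: "y = ?T" if y: "y \<ge> 0" "viewcount lps lpu alpha th y = beta" for y
  proof (cases "y \<le> alpha / ?a")
    case True
    then have "viewcount lps lpu alpha th y = ?a * y" by (simp add: viewcount_def)
    with y have e: "beta = ?a * y" by simp
    have "beta \<le> alpha" using True a e by (simp add: field_simps)
    then show ?thesis using e a by simp
  next
    case False
    then have "viewcount lps lpu alpha th y = ?a * y + lpu * (y - alpha / ?a)" by (simp add: viewcount_def)
    with y have e: "beta = ?a * y + lpu * (y - alpha / ?a)" by simp
    have "alpha < ?a * y" using False a by (simp add: field_simps)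
    then have "\<not> beta \<le> alpha" using e c False by (smt (verit) mult_pos_pos)
    moreover have "y * (?a + lpu) = beta + lpu * alpha / ?a" using e ac by (simp add: algebra_simps)
    then have "y = (beta + lpu * alpha / ?a) / (?a + lpu)" using ac by (simp add: eq_divide_eq)
    ultimately show ?thesis by simp
  qed
  show ?thesis unfolding t_beta_def
    by (rule Least_equality) (use vT uniq in auto)
qed

lemma tb_diff:
  assumes a: "lps th > 0" and c: "lpu > 0" and al: "alpha \<ge> 0" and b: "beta \<ge> 0"
  shows "beta \<le> alpha \<Longrightarrow> t_beta lps lpu alpha beta th - t_beta lps lpu alpha alpha th = (beta - alpha) / lps th"
    and "alpha \<le> beta \<Longrightarrow> t_beta lps lpu alpha beta th - t_beta lps lpu alpha alpha th = (beta - alpha) / (lps th + lpu)"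
proof -
  have ac: "lps th + lpu \<noteq> 0" "lps th \<noteq> 0" using a c by auto
  have ta: "t_beta lps lpu alpha alpha th = alpha / lps th" using tb_formula[where lps=lps and th=th, OF a c al al] by simp
  show "beta \<le> alpha \<Longrightarrow> t_beta lps lpu alpha beta th - t_beta lps lpu alpha alpha th = (beta - alpha) / lps th"
    using tb_formula[where lps=lps and th=th, OF a c al b] ta by (simp add: diff_divide_distrib)
  assume h: "alpha \<le> beta"
  show "t_beta lps lpu alpha beta th - t_beta lps lpu alpha alpha th = (beta - alpha) / (lps th + lpu)"
  proof (cases "beta = alpha")
    case True then show ?thesis by simp
  next
    case False
    then have "\<not> beta \<le> alpha" using h by simp
    then have "t_beta lps lpu alpha beta th = (beta + lpu * alpha / lps th) / (lps th + lpu)"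
      using tb_formula[where lps=lps and th=th, OF a c al b] by simp
    moreover have "(beta + lpu * alpha / lps th) / (lps th + lpu) - alpha / lps th = (beta - alpha) / (lps th + lpu)"
      using ac by (simp add: divide_simps) (simp add: algebra_simps)
    ultimately show ?thesis using ta by simp
  qed
qed

lemma br_core:
  assumes aG: "lps G > 0" and aB: "lps B > 0" and c: "lpu > 0" and al: "alpha \<ge> 0" and b: "b \<ge> 0"
    and h1: "b \<le> alpha \<Longrightarrow> 0 \<le> (alpha - b) * ((1 - piG) / lps B - piG / lps G)"
    and h2: "alpha \<le> b \<Longrightarrow> (b - alpha) * ((1 - piG) / (lps B + lpu) - piG / (lps G + lpu)) \<le> 0"
  shows "utility lps lpu tau piG alpha b \<le> utility lps lpu tau piG alpha alpha"
proof -
  have U: "utility lps lpu tau piG alpha b - utility lps lpu tau piG alpha alpha =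
     (1 - piG) * (t_beta lps lpu alpha b B - t_beta lps lpu alpha alpha B)
     - piG * (t_beta lps lpu alpha b G - t_beta lps lpu alpha alpha G)"
    unfolding utility_def by (simp add: algebra_simps)
  show ?thesis
  proof (cases "b \<le> alpha")
    case True
    have "utility lps lpu tau piG alpha b - utility lps lpu tau piG alpha alpha =
       - ((alpha - b) * ((1 - piG) / lps B - piG / lps G))"
      unfolding U tb_diff(1)[where lps=lps and th=G, OF aG c al b True] tb_diff(1)[where lps=lps and th=B, OF aB c al b True]
      by (simp add: algebra_simps diff_divide_distrib)
    then show ?thesis using h1[OF True] by simp
  next
    case False
    then have F: "alpha \<le> b" by simp
    have "utility lps lpu tau piG alpha b - utility lps lpu tau piG alpha alpha =
       (b - alpha) * ((1 - piG) / (lps B + lpu) - piG / (lps G + lpu))"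
      unfolding U tb_diff(2)[where lps=lps and th=G, OF aG c al b F] tb_diff(2)[where lps=lps and th=B, OF aB c al b F]
      by (simp add: algebra_simps diff_divide_distrib)
    then show ?thesis using h2[OF F] by simp
  qed
qed

theorem theorem1:
  fixes lps :: "ctype \<Rightarrow> real" and lpu tau piG :: real
  assumes "tau > 0" and "0 \<le> piG" and "piG \<le> 1"
    and "lps G \<ge> lps B" and "lps B > 0" and "lpu > 0"
  shows "(piG / lps G \<ge> (1 - piG) / lps B \<longrightarrow> symmetric_wardrop lps lpu tau piG 0)
    \<and> (piG / lps G \<le> (1 - piG) / lps B \<and> piG / (lps G + lpu) \<ge> (1 - piG) / (lps B + lpu) \<longrightarrow>
         (\<forall>alpha. 0 \<le> alpha \<and> alpha \<le> beta_tau_B lps lpu tau alpha \<longrightarrow>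
            symmetric_wardrop lps lpu tau piG alpha))
    \<and> (piG / lps G \<le> (1 - piG) / lps B \<and> piG / (lps G + lpu) < (1 - piG) / (lps B + lpu) \<longrightarrow>
         (\<exists>alpha. alpha = beta_tau_B lps lpu tau alpha) \<and>
         (\<forall>alpha. alpha = beta_tau_B lps lpu tau alpha \<longrightarrow> symmetric_wardrop lps lpu tau piG alpha))"
proof (intro conjI impI allI)
  note tau = assms(1) and p0 = assms(2) and p1 = assms(3) and aGB = assms(4) and aB = assms(5) and c = assms(6)
  have aG: "lps G > 0" using aGB aB by simp
  have btB_pos: "beta_tau_B lps lpu tau alpha \<ge> lps B * tau" for alpha
    unfolding beta_tau_B_def viewcount_def using c by simp
  have lbt: "lps B * tau > 0" using aB tau by simp
  {
    assume h: "(1 - piG) / lps B \<le> piG / lps G"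
    have h': "(1 - piG) * lps G \<le> piG * lps B" using h aB aG by (simp add: divide_simps)
    have pq: "1 - piG \<le> piG"
    proof (rule ccontr)
      assume "\<not> 1 - piG \<le> piG"
      then have "piG * lps B < (1 - piG) * lps B" using aB by simp
      also have "\<dots> \<le> (1 - piG) * lps G" using aGB p1 by (simp add: mult_left_mono)
      finally show False using h' by simp
    qed
    have "(1 - piG) * lpu \<le> piG * lpu" using pq c by (simp add: mult_right_mono)
    then have "(1 - piG) * (lps G + lpu) \<le> piG * (lps B + lpu)"
      using h' by (simp add: distrib_left)
    then have D2: "(1 - piG) / (lps B + lpu) - piG / (lps G + lpu) \<le> 0"
      using aB aG c by (simp add: divide_simps)
    show "symmetric_wardrop lps lpu tau piG 0"
      unfolding symmetric_wardrop_def best_response_def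
    proof (intro conjI allI impI)
      show "0 \<le> beta_tau_B lps lpu tau 0" using btB_pos[of 0] lbt by simp
      then show "0 \<le> beta_tau_B lps lpu tau 0" .
      fix b assume b: "0 \<le> b \<and> b \<le> beta_tau_B lps lpu tau 0"
      show "utility lps lpu tau piG 0 b \<le> utility lps lpu tau piG 0 0"
        by (rule br_core[OF aG aB c]) (use b D2 in \<open>auto intro: mult_nonneg_nonpos\<close>)
    qed simp_all
  }
  {
    fix alpha
    assume h: "piG / lps G \<le> (1 - piG) / lps B \<and> (1 - piG) / (lps B + lpu) \<le> piG / (lps G + lpu)"
      and al: "0 \<le> alpha \<and> alpha \<le> beta_tau_B lps lpu tau alpha"
    show "symmetric_wardrop lps lpu tau piG alpha"
      unfolding symmetric_wardrop_def best_response_def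
    proof (intro conjI allI impI)
      fix b assume b: "0 \<le> b \<and> b \<le> beta_tau_B lps lpu tau alpha"
      show "utility lps lpu tau piG alpha b \<le> utility lps lpu tau piG alpha alpha"
        by (rule br_core[OF aG aB c]) (use b h al in \<open>auto intro: mult_nonneg_nonpos mult_nonneg_nonneg\<close>)
    qed (use al in auto)
  }
  {
    assume h: "piG / lps G \<le> (1 - piG) / lps B \<and> piG / (lps G + lpu) < (1 - piG) / (lps B + lpu)"
    show "\<exists>alpha. alpha = beta_tau_B lps lpu tau alpha"
      by (rule exI[of _ "lps B * tau"]) (use aB in \<open>simp add: beta_tau_B_def viewcount_def\<close>)
    fix alpha assume al: "alpha = beta_tau_B lps lpu tau alpha"
    have a0: "alpha \<ge> 0" using al btB_pos[of alpha] lbt by simp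
    show "symmetric_wardrop lps lpu tau piG alpha"
      unfolding symmetric_wardrop_def best_response_def
    proof (intro conjI allI impI)
      fix b assume b: "0 \<le> b \<and> b \<le> beta_tau_B lps lpu tau alpha"
      show "utility lps lpu tau piG alpha b \<le> utility lps lpu tau piG alpha alpha"
      proof (rule br_core[OF aG aB c a0])
        show "0 \<le> b" using b by simp
        show "0 \<le> (alpha - b) * ((1 - piG) / lps B - piG / lps G)" if "b \<le> alpha"
          using that h by (auto intro: mult_nonneg_nonneg)
        show "(b - alpha) * ((1 - piG) / (lps B + lpu) - piG / (lps G + lpu)) \<le> 0" if "alpha \<le> b"
        proof -
          have "b = alpha" using that b al by simp
          then show ?thesis by simp
        qed
      qed
    qed (use al a0 in auto)
  }
qed

end
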